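(* There exists a constant $c_1>0$ such that for all sufficiently large $n$ with $t\le c_1 n$ and for all $k$ with $30\, x\log n\le k\le c_1 n$, the probability that the reverse reachable set of $B$ has exactly $k$ vertices is at most $\frac{1}{n^2}$.
   Context: Random graph model: $V$ is a set of $n$ vertices, $B\subseteq V$ a target set with $|B|=t$, each $v\in V$ has a prescribed out-degree $d_v$ with $2\le d_{\min}\le d_v\le d_{\max}$ (constants independent of $n$), and for each $v$ independently its out-neighbour set is chosen uniformly at random among all $d_v$-element subsets of $V$. $x$ is the number of distinct values among the $d_v$. The reverse reachable set of $B$ is the set of vertices having a directed path to a vertex of $B$. $\log$ is the natural logarithm. *)

theory Defs
  imports "HOL-Probability.Probability"
begin

text \<open>Vertex set V = {..<n}. A configuration assigns to each vertex v < n its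
  out-neighbour set, a d v - element subset of V (extensional outside V).\<close>
definition configs :: "nat \<Rightarrow> (nat \<Rightarrow> nat) \<Rightarrow> (nat \<Rightarrow> nat set) set" where
  "configs n d = (\<Pi>\<^sub>E v\<in>{..<n}. {S. S \<subseteq> {..<n} \<and> card S = d v})"

text \<open>The random digraph: independent uniform choices = uniform distribution
  on the product of the choice sets.\<close>
definition random_digraph :: "nat \<Rightarrow> (nat \<Rightarrow> nat) \<Rightarrow> (nat \<Rightarrow> nat set) pmf" where
  "random_digraph n d = pmf_of_set (configs n d)"

definition arc_rel :: "nat \<Rightarrow> (nat \<Rightarrow> nat set) \<Rightarrow> (nat \<times> nat) set" where
  "arc_rel n N = {(v, w). v < n \<and> w \<in> N v}"

definition rev_reach :: "nat \<Rightarrow> (nat \<Rightarrow> nat set) \<Rightarrow> nat set \<Rightarrow> nat set" where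
  "rev_reach n N B = {u. u < n \<and> (\<exists>b\<in>B. (u, b) \<in> (arc_rel n N)\<^sup>*)}"

end

theory Submission
  imports Defs
begin

lemma binom_ratio:
  "k \<le> m \<Longrightarrow> real ((m-k) choose d) * real m ^ d \<le> real (m choose d) * real (m-k)^d"
proof (induction d arbitrary: m)
  case 0 then show ?case by simp
next
  case (Suc d)
  show ?case
  proof (cases "k = 0 \<or> m - k = 0")
    case True then show ?thesis by auto
  next
    case False
    then have k1: "k \<ge> 1" and mk: "m > k" by auto
    have IH: "real ((m-1-k) choose d) * real (m-1) ^ d \<le> real ((m-1) choose d) * real (m-1-k)^d"
      using Suc.IH[of "m-1"] mk by simp
    have e1: "real (Suc d) * real ((m-k) choose Suc d) = real (m-k) * real ((m-k-1) choose d)"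
      using binomial_absorption[of d "m-k"] by (metis of_nat_mult)
    have e2: "real (Suc d) * real (m choose Suc d) = real m * real ((m-1) choose d)"
      using binomial_absorption[of d m] by (metis of_nat_mult)
    have m1pos: "real (m-1) > 0" using mk k1 by simp
    have step: "real (m-1-k) * real m \<le> real (m-k) * real (m-1)"
      using mk k1 by (simp add: of_nat_diff algebra_simps)
    have step': "(real (m-1-k) * real m)^d \<le> (real (m-k) * real (m-1))^d"
      by (rule power_mono[OF step]) simp
    have "real ((m-k-1) choose d) * real m ^ d * real (m-1) ^ d
          \<le> real ((m-1) choose d) * real (m-1-k)^d * real m ^ d"
      using mult_right_mono[OF IH, of "real m ^ d"] by (simp add: algebra_simps)
    also have "\<dots> = real ((m-1) choose d) * (real (m-1-k) * real m)^d"
      by (simp add: power_mult_distrib)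
    also have "\<dots> \<le> real ((m-1) choose d) * (real (m-k) * real (m-1))^d"
      by (rule mult_left_mono[OF step']) simp
    finally have A: "real ((m-k-1) choose d) * real m ^ d \<le> real ((m-1) choose d) * real (m-k)^d"
      using m1pos by (simp add: power_mult_distrib mult.assoc[symmetric] mult_le_cancel_right)
    have "real (Suc d) * (real ((m-k) choose Suc d) * real m ^ Suc d)
          = real m * real m ^ d * (real (Suc d) * real ((m-k) choose Suc d))"
      by (simp add: algebra_simps)
    also have "\<dots> = real m * real m ^ d * (real (m-k) * real ((m-k-1) choose d))"
      by (simp only: e1)
    also have "\<dots> = real (m-k) * real m * (real ((m-k-1) choose d) * real m ^ d)"
      by (simp only: ac_simps)
    also have "\<dots> \<le> real (m-k) * real m * (real ((m-1) choose d) * real (m-k)^d)"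
      by (rule mult_left_mono[OF A]) simp
    also have "\<dots> = real (m-k) * real (m-k)^d * (real m * real ((m-1) choose d))"
      by (simp only: ac_simps)
    also have "\<dots> = real (m-k) * real (m-k)^d * (real (Suc d) * real (m choose Suc d))"
      by (simp only: e2)
    also have "\<dots> = real (Suc d) * (real (m choose Suc d) * real (m-k)^Suc d)"
      by (simp add: algebra_simps)
    finally show ?thesis by (simp only: mult_le_cancel_left_pos of_nat_0_less_iff zero_less_Suc)
  qed
qed

lemma ln2_le: "ln (2::real) \<le> 0.918"
proof -
  have a: "1.459 \<le> exp (0.459::real)" using exp_ge_add_one_self[of "0.459::real"] by simp
  have "exp (0.918::real) = exp 0.459 * exp 0.459" by (simp flip: exp_add)
  also have "\<dots> \<ge> 1.459 * 1.459" using a by (intro mult_mono) auto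
  finally have "2 \<le> exp (0.918::real)" by simp
  then show ?thesis by (metis ln_exp ln_le_cancel_iff exp_gt_zero zero_less_numeral order_less_le_trans)
qed

lemma numeric:
  fixes n k t :: nat
  assumes n2: "n \<ge> 2" and kle: "real k \<le> real n / 100" and tle: "real t \<le> real n / 100"
    and klog: "30 * ln (real n) \<le> real k"
  shows "2 ^ k * ((1 + (1 - real k / real n)^2) / 2) ^ (n - t) \<le> 1 / (real n)^2"
proof -
  define u where "u = real k / real n"
  have npos: "real n > 0" using n2 by simp
  have u0: "0 \<le> u" and u1: "u \<le> 1/100" using kle npos by (auto simp: u_def field_simps)
  have ku: "real k = u * real n" using npos by (simp add: u_def)
  define r where "r = (1 + (1 - u)^2) / 2"
  have r0: "0 \<le> r" by (simp add: r_def)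
  have r_eq: "r = 1 + (- u + u^2/2)" by (simp add: r_def power2_eq_square field_simps)
  have r_le: "r \<le> exp (- u + u^2/2)" unfolding r_eq by (rule exp_ge_add_one_self)
  have neg: "- u + u^2/2 \<le> 0" proof -
    have "u * u \<le> 1 * u" using u0 u1 by (intro mult_right_mono) auto
    then show ?thesis using u0 by (simp add: power2_eq_square)
  qed
  have tn: "t \<le> n" using tle npos by (simp add: field_simps) 
  have nt: "real (n - t) \<ge> 0.99 * real n" using tle tn by (simp add: of_nat_diff)
  have "r ^ (n - t) \<le> exp (- u + u^2/2) ^ (n - t)" by (rule power_mono[OF r_le r0])
  also have "\<dots> = exp (real (n - t) * (- u + u^2/2))" by (simp add: exp_of_nat_mult)
  also have "\<dots> \<le> exp (0.99 * real n * (- u + u^2/2))"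
    using mult_right_mono_neg[OF nt neg] by simp
  also have "\<dots> \<le> exp (- 0.985 * real k)"
  proof -
    have "0.99 * real n * (- u + u^2/2) = - 0.99 * real k * (1 - u/2)"
      by (simp add: ku power2_eq_square field_simps)
    also have "\<dots> \<le> - 0.985 * real k" proof -
      have "0.985 \<le> 0.99 * (1 - u/2)" using u1 by simp
      from mult_left_mono[OF this, of "real k"] show ?thesis by (simp add: algebra_simps)
    qed
    finally show ?thesis by simp
  qed
  finally have A: "r ^ (n - t) \<le> exp (- 0.985 * real k)" .
  have B: "(2::real) ^ k = exp (real k * ln 2)"
    using exp_of_nat_mult[of k "ln (2::real)"] by simp
  have "(2::real) ^ k * r ^ (n - t) \<le> exp (real k * ln 2) * exp (- 0.985 * real k)"
    unfolding B by (rule mult_left_mono[OF A]) simp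
  also have "\<dots> = exp (real k * ln 2 + - 0.985 * real k)" by (rule exp_add[symmetric])
  also have "\<dots> = exp (real k * (ln 2 - 0.985))" by (rule arg_cong[where f=exp]) (simp add: algebra_simps)
  also have "\<dots> \<le> exp (- 2 * ln (real n))"
  proof -
    have "ln (real n) \<ge> 0" using n2 by simp
    then have "real k * (ln 2 - 0.985) \<le> - 2 * ln (real n)" proof -
      have "real k * (ln 2 - 0.985) \<le> real k * (- 0.067)"
        using ln2_le by (intro mult_left_mono) auto
      also have "\<dots> \<le> (30 * ln (real n)) * (-0.067)" using klog by (intro mult_right_mono_neg) auto
      finally show ?thesis using \<open>ln (real n) \<ge> 0\<close> by simp
    qed
    then show ?thesis by simp
  qed
  also have "\<dots> = 1 / (real n)^2"
  proof -
    have h0: "2 * ln (real n) = ln (real n) + ln (real n)" by simp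
    have h2: "exp (2 * ln (real n)) = real n * real n"
      unfolding h0 exp_add using npos by simp
    have h1: "exp (- 2 * ln (real n)) * exp (2 * ln (real n)) = 1"
      by (simp flip: exp_add)
    have "exp (- 2 * ln (real n)) = 1 / exp (2 * ln (real n))"
      using h1 by (simp add: field_simps)
    then show ?thesis using h2 by (simp add: power2_eq_square)
  qed
  finally show ?thesis by (simp only: r_def u_def)
qed

lemma sum_bound:
  fixes a :: "nat \<Rightarrow> real" and U B :: "nat set"
  assumes fin: "finite U" and BU: "B \<subseteq> U" and a0: "\<And>v. 0 \<le> a v" and a1: "\<And>v. a v \<le> 1"
  shows "(\<Sum>S\<in>{S. B \<subseteq> S \<and> S \<subseteq> U \<and> card S = k}.
            \<Prod>v\<in>U. (if v \<in> B then 1 else if v \<in> S then 1 - a v else a v))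
         \<le> 2 ^ k * (\<Prod>v\<in>U - B. (1 + a v) / 2)"
proof -
  define W where "W = U - B"
  define Sk where "Sk = {S. B \<subseteq> S \<and> S \<subseteq> U \<and> card S = k}"
  define g where "g T = (\<Prod>v\<in>W. (if v \<in> T then 1 - a v else a v))" for T
  have finW: "finite W" using fin by (simp add: W_def)
  have finB: "finite B" using fin BU finite_subset by blast
  have g0: "g T \<ge> 0" for T unfolding g_def using a0 a1 by (intro prod_nonneg) auto
  have step1: "(\<Prod>v\<in>U. (if v \<in> B then 1 else if v \<in> S then 1 - a v else a v)) = g (S - B)"
    for S
  proof -
    have "U = B \<union> W" "B \<inter> W = {}" using BU by (auto simp: W_def)
    then have "(\<Prod>v\<in>U. (if v \<in> B then 1 else if v \<in> S then 1 - a v else a v))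
       = (\<Prod>v\<in>B. (if v \<in> B then 1 else if v \<in> S then 1 - a v else a v)) *
         (\<Prod>v\<in>W. (if v \<in> B then 1 else if v \<in> S then 1 - a v else a v))"
      using finB finW by (simp add: prod.union_disjoint)
    also have "(\<Prod>v\<in>B. (if v \<in> B then 1 else if v \<in> S then 1 - a v else a v)) = 1"
      by (rule prod.neutral) simp
    also have "(\<Prod>v\<in>W. (if v \<in> B then 1 else if v \<in> S then 1 - a v else a v)) = g (S - B)"
      unfolding g_def by (rule prod.cong) (auto simp: W_def)
    finally show ?thesis by simp
  qed
  have inj: "inj_on (\<lambda>S. S - B) Sk"
    by (rule inj_onI) (auto simp: Sk_def)
  have img: "(\<lambda>S. S - B) ` Sk \<subseteq> {T. T \<subseteq> W \<and> card T \<le> k}"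
  proof
    fix T assume "T \<in> (\<lambda>S. S - B) ` Sk"
    then obtain S where S: "S \<in> Sk" "T = S - B" by blast
    have "finite S" using S(1) fin by (auto simp: Sk_def intro: finite_subset)
    then have "card T \<le> card S" using S by (simp add: card_mono)
    then show "T \<in> {T. T \<subseteq> W \<and> card T \<le> k}" using S by (auto simp: Sk_def W_def)
  qed
  define h where "h T = (\<Prod>v\<in>T. (1 - a v) / 2) * (\<Prod>v\<in>W - T. a v)" for T
  have h0: "h T \<ge> 0" for T unfolding h_def using a0 a1
    by (intro mult_nonneg_nonneg prod_nonneg) auto
  have gh: "g T \<le> 2 ^ k * h T" if T: "T \<subseteq> W" "card T \<le> k" for T
  proof -
    have finT: "finite T" using T finW finite_subset by blast
    have "g T = (\<Prod>v\<in>T. 1 - a v) * (\<Prod>v\<in>W - T. a v)"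
    proof -
      have TW: "T \<inter> W = T" "W \<inter> T = T" using T by auto
      show ?thesis unfolding g_def using T finW
        by (simp add: prod.If_cases TW Diff_eq[symmetric])
    qed
    also have "(\<Prod>v\<in>T. 1 - a v) = 2 ^ card T * (\<Prod>v\<in>T. (1 - a v) / 2)"
      using finT by (simp add: prod_dividef)
    finally have "g T = 2 ^ card T * h T" by (simp add: h_def)
    also have "\<dots> \<le> 2 ^ k * h T"
      using T h0 by (intro mult_right_mono) (auto intro: power_increasing)
    finally show ?thesis .
  qed
  have "(\<Sum>S\<in>Sk. \<Prod>v\<in>U. (if v \<in> B then 1 else if v \<in> S then 1 - a v else a v))
      = (\<Sum>S\<in>Sk. g (S - B))" by (simp add: step1)
  also have "\<dots> = (\<Sum>T\<in>(\<lambda>S. S - B) ` Sk. g T)" by (simp add: sum.reindex[OF inj])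
  also have "\<dots> \<le> (\<Sum>T\<in>(\<lambda>S. S - B) ` Sk. 2 ^ k * h T)"
  proof (rule sum_mono)
    fix T assume "T \<in> (\<lambda>S. S - B) ` Sk"
    with img have "T \<subseteq> W" "card T \<le> k" by auto
    then show "g T \<le> 2 ^ k * h T" by (rule gh)
  qed
  also have "\<dots> \<le> (\<Sum>T\<in>Pow W. 2 ^ k * h T)"
    using img finW h0 by (intro sum_mono2) auto
  also have "\<dots> = 2 ^ k * (\<Prod>v\<in>W. (1 - a v) / 2 + a v)"
    by (simp add: sum_distrib_left[symmetric] h_def prod_add[OF finW])
  also have "\<dots> = 2 ^ k * (\<Prod>v\<in>W. (1 + a v) / 2)"
    by (simp add: field_simps)
  finally show ?thesis by (simp add: Sk_def W_def)
qed

lemma graph_part: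
  assumes N: "N \<in> configs n d" and BU: "B \<subseteq> {..<n}"
  defines "R \<equiv> rev_reach n N B"
  shows "B \<subseteq> R" "R \<subseteq> {..<n}"
    "\<And>v. v < n \<Longrightarrow> v \<in> R - B \<Longrightarrow> N v \<inter> R \<noteq> {}"
    "\<And>v. v < n \<Longrightarrow> v \<notin> R \<Longrightarrow> N v \<inter> R = {}"
proof -
  have Nsub: "N v \<subseteq> {..<n}" if "v < n" for v
    using N that by (auto simp: configs_def PiE_iff)
  show "B \<subseteq> R" using BU by (auto simp: R_def rev_reach_def)
  show "R \<subseteq> {..<n}" by (auto simp: R_def rev_reach_def)
  show "N v \<inter> R \<noteq> {}" if v: "v < n" "v \<in> R - B" for v
  proof -
    from v obtain b where b: "b \<in> B" "(v, b) \<in> (arc_rel n N)\<^sup>*"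
      by (auto simp: R_def rev_reach_def)
    have "v \<noteq> b" using b v by auto
    with b(2) obtain w where w: "(v, w) \<in> arc_rel n N" "(w, b) \<in> (arc_rel n N)\<^sup>*"
      by (auto elim: converse_rtranclE)
    have "w \<in> N v" using w(1) by (simp add: arc_rel_def)
    moreover have "w < n" using Nsub[OF v(1)] \<open>w \<in> N v\<close> by auto
    ultimately have "w \<in> N v \<inter> R" using w(2) b(1) by (auto simp: R_def rev_reach_def)
    then show ?thesis by blast
  qed
  show "N v \<inter> R = {}" if v: "v < n" "v \<notin> R" for v
  proof (rule ccontr)
    assume "N v \<inter> R \<noteq> {}"
    then obtain w where w: "w \<in> N v" "w \<in> R" by blast
    then obtain b where b: "b \<in> B" "(w, b) \<in> (arc_rel n N)\<^sup>*"
      by (auto simp: R_def rev_reach_def)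
    have "(v, w) \<in> arc_rel n N" using v w by (simp add: arc_rel_def)
    with b have "(v, b) \<in> (arc_rel n N)\<^sup>*" by (meson converse_rtrancl_into_rtrancl)
    then have "v \<in> R" using v b by (auto simp: R_def rev_reach_def)
    with v show False by simp
  qed
qed


lemma main_bound:
  fixes n k :: nat and d :: "nat \<Rightarrow> nat" and B :: "nat set"
  assumes dn: "\<And>v. v < n \<Longrightarrow> d v \<le> n" and BU: "B \<subseteq> {..<n}"
  defines "U \<equiv> {..<n}"
  defines "a \<equiv> (\<lambda>v. real ((n - k) choose d v) / real (n choose d v))"
  shows "measure_pmf.prob (random_digraph n d) {N. card (rev_reach n N B) = k}
       \<le> (\<Sum>S\<in>{S. B \<subseteq> S \<and> S \<subseteq> U \<and> card S = k}.
            \<Prod>v\<in>U. (if v \<in> B then 1 else if v \<in> S then 1 - a v else a v))"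
proof -
  define ch where "ch v = {S. S \<subseteq> U \<and> card S = d v}" for v
  define C where "C = configs n d"
  define Ev where "Ev = {N. card (rev_reach n N B) = k}"
  define Sk where "Sk = {S. B \<subseteq> S \<and> S \<subseteq> U \<and> card S = k}"
  define F where "F S v = {T. T \<subseteq> U \<and> card T = d v \<and> (v \<in> S - B \<longrightarrow> T \<inter> S \<noteq> {})
                                \<and> (v \<notin> S \<longrightarrow> T \<inter> S = {})}" for S v
  have finU: "finite U" by (simp add: U_def)
  have C_eq: "C = PiE U ch" unfolding C_def configs_def U_def by (rule PiE_cong) (simp add: ch_def U_def)
  have finch: "finite (ch v)" for v unfolding ch_def using finU
    by (rule finite_subset[rotated, OF finite_Pow_iff[THEN iffD2]]) auto
  have finC: "finite C" unfolding C_eq using finU finch by (intro finite_PiE) auto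
  have cardch: "card (ch v) = n choose d v" for v
    unfolding ch_def using n_subsets[OF finU, of "d v"] by (simp add: U_def)
  have binpos: "n choose d v > 0" if "v \<in> U" for v using dn that by (simp add: U_def)
  have cardC: "card C = (\<Prod>v\<in>U. n choose d v)" unfolding C_eq
    by (simp add: card_PiE[OF finU] cardch)
  have Cne: "C \<noteq> {}" using cardC binpos finU by (metis card.empty prod_pos not_less0 zero_less_iff_neq_zero)
  have finF: "finite (F S v)" for S v unfolding F_def using finU
    by (rule finite_subset[rotated, OF finite_Pow_iff[THEN iffD2]]) auto
  have finSk: "finite Sk" unfolding Sk_def using finU
    by (rule finite_subset[rotated, OF finite_Pow_iff[THEN iffD2]]) auto
  have cover: "C \<inter> Ev \<subseteq> (\<Union>S\<in>Sk. PiE U (F S))"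
  proof
    fix N assume "N \<in> C \<inter> Ev"
    then have NC: "N \<in> configs n d" and Nk: "card (rev_reach n N B) = k"
      by (auto simp: C_def Ev_def)
    define R where "R = rev_reach n N B"
    note gp = graph_part[OF NC BU, folded R_def]
    have "R \<in> Sk" using gp(1,2) Nk by (simp add: Sk_def R_def U_def)
    moreover have "N \<in> PiE U (F R)"
    proof -
      have "N \<in> PiE U ch" using NC C_eq C_def by simp
      then show ?thesis using gp(3,4)
        by (auto simp: PiE_iff F_def ch_def U_def)
    qed
    ultimately show "N \<in> (\<Union>S\<in>Sk. PiE U (F S))" by blast
  qed
  have card_le: "card (C \<inter> Ev) \<le> (\<Sum>S\<in>Sk. card (PiE U (F S)))"
  proof -
    have "card (C \<inter> Ev) \<le> card (\<Union>S\<in>Sk. PiE U (F S))"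
      using cover finSk finU finF by (intro card_mono) (auto intro!: finite_PiE)
    also have "\<dots> \<le> (\<Sum>S\<in>Sk. card (PiE U (F S)))" using finSk by (rule card_UN_le)
    finally show ?thesis .
  qed
  have cardF: "real (card (F S v)) / real (n choose d v)
      = (if v \<in> B then 1 else if v \<in> S then 1 - a v else a v)"
    if S: "S \<in> Sk" and v: "v \<in> U" for S v
  proof -
    have BS: "B \<subseteq> S" and SU: "S \<subseteq> U" and cS: "card S = k" using S by (auto simp: Sk_def)
    have finS: "finite S" using SU finU finite_subset by blast
    define Z where "Z = {T. T \<subseteq> U - S \<and> card T = d v}"
    have cZ: "card Z = (n - k) choose d v"
      unfolding Z_def using n_subsets[of "U - S" "d v"] finU SU cS finS
      by (simp add: card_Diff_subset U_def)
    have Zch: "Z \<subseteq> ch v" by (auto simp: Z_def ch_def)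
    have bp: "real (n choose d v) > 0" using binpos[OF v] by simp
    show ?thesis
    proof (cases "v \<in> B")
      case True
      then have "F S v = ch v" using BS by (auto simp: F_def ch_def)
      then show ?thesis using True bp by (simp add: cardch)
    next
      case nB: False
      show ?thesis
      proof (cases "v \<in> S")
        case True
        then have "F S v = ch v - Z" using nB by (auto simp: F_def ch_def Z_def)
        then have "card (F S v) = card (ch v) - card Z"
          using Zch finch by (simp add: card_Diff_subset finite_subset)
        moreover have "card Z \<le> card (ch v)" using Zch finch by (rule card_mono[rotated])
        ultimately have "real (card (F S v)) = real (n choose d v) - real ((n - k) choose d v)"
          by (simp add: of_nat_diff cZ cardch)
        then show ?thesis using True nB bp by (simp add: a_def diff_divide_distrib)
      next
        case False
        then have "F S v = Z" by (auto simp: F_def Z_def)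
        then show ?thesis using False nB bp by (simp add: a_def cZ)
      qed
    qed
  qed
  have "measure_pmf.prob (random_digraph n d) {N. card (rev_reach n N B) = k}
        = real (card (C \<inter> Ev)) / real (card C)"
    unfolding random_digraph_def C_def[symmetric] Ev_def[symmetric]
    using measure_pmf_of_set[OF Cne finC] by simp
  also have "\<dots> \<le> real (\<Sum>S\<in>Sk. card (PiE U (F S))) / real (card C)"
  proof (rule divide_right_mono)
    show "real (card (C \<inter> Ev)) \<le> real (\<Sum>S\<in>Sk. card (PiE U (F S)))"
      using card_le by (simp only: of_nat_le_iff)
  qed simp
  also have "\<dots> = (\<Sum>S\<in>Sk. \<Prod>v\<in>U. real (card (F S v)) / real (n choose d v))"
    by (simp add: cardC sum_divide_distrib card_PiE[OF finU] prod_dividef)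
  also have "\<dots> = (\<Sum>S\<in>Sk. \<Prod>v\<in>U. (if v \<in> B then 1 else if v \<in> S then 1 - a v else a v))"
    using cardF by (intro sum.cong prod.cong) auto
  finally show ?thesis by (simp add: Sk_def)
qed
theorem lemma10:
  fixes dmin dmax :: nat
  assumes "2 \<le> dmin" and "dmin \<le> dmax"
  shows "\<exists>c1::real. c1 > 0 \<and> (\<exists>N0::nat. \<forall>n \<ge> N0. \<forall>(d :: nat \<Rightarrow> nat) (B :: nat set) (t :: nat) (k :: nat).
           (\<forall>v<n. dmin \<le> d v \<and> d v \<le> dmax) \<longrightarrow>
           B \<subseteq> {..<n} \<longrightarrow> card B = t \<longrightarrow> real t \<le> c1 * real n \<longrightarrow>
           30 * real (card (d ` {..<n})) * ln (real n) \<le> real k \<longrightarrow> real k \<le> c1 * real n \<longrightarrow>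
           measure_pmf.prob (random_digraph n d) {N. card (rev_reach n N B) = k} \<le> 1 / (real n)^2)"
proof (intro exI[of _ "1/100"] conjI exI[of _ "dmax + 2"] allI impI)
  show "(0::real) < 1/100" by simp
  fix n d B t k
  assume n: "dmax + 2 \<le> n" and dv: "\<forall>v<n. dmin \<le> d v \<and> d v \<le> dmax"
    and BU: "B \<subseteq> {..<n}" and ct: "card B = t" and tle: "real t \<le> 1/100 * real n"
    and klog0: "30 * real (card (d ` {..<n})) * ln (real n) \<le> real k"
    and kle: "real k \<le> 1/100 * real n"
  define U where "U = {..<n}"
  define a where "a = (\<lambda>v. real ((n - k) choose d v) / real (n choose d v))"
  define u where "u = real k / real n"
  have n2: "n \<ge> 2" using n by simp
  have npos: "real n > 0" using n2 by simp
  have dn: "\<And>v. v < n \<Longrightarrow> d v \<le> n" using dv n by fastforce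
  have kn: "k \<le> n" using kle npos by simp
  have x1: "1 \<le> real (card (d ` {..<n}))"
  proof -
    have "d 0 \<in> d ` {..<n}" using n2 by auto
    then have "card (d ` {..<n}) > 0" by (auto simp: card_gt_0_iff)
    then show ?thesis by simp
  qed
  have lnn: "ln (real n) \<ge> 0" using n2 by simp
  have klog: "30 * ln (real n) \<le> real k"
  proof -
    have "30 * ln (real n) \<le> 30 * real (card (d ` {..<n})) * ln (real n)"
      using mult_right_mono[OF x1 lnn] by simp
    with klog0 show ?thesis by linarith
  qed
  have a0: "0 \<le> a v" for v by (simp add: a_def)
  have a1: "a v \<le> 1" for v
  proof -
    have "(n - k) choose d v \<le> n choose d v" by (rule binomial_right_mono) simp
    then show ?thesis by (cases "n choose d v = 0") (auto simp: a_def divide_le_eq_1)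
  qed
  have u0: "0 \<le> u" and u1: "u \<le> 1" using npos kn by (auto simp: u_def)
  have au: "a v \<le> (1 - u)^2" if v: "v \<in> U" for v
  proof -
    have vn: "v < n" using v by (simp add: U_def)
    have bp: "real (n choose d v) > 0" using dn[OF vn] by simp
    have np: "real n ^ d v > 0" using npos by simp
    have br: "real ((n-k) choose d v) * real n ^ d v \<le> real (n choose d v) * real (n-k) ^ d v"
      by (rule binom_ratio[OF kn])
    have "a v \<le> real (n-k) ^ d v / real n ^ d v"
      unfolding a_def using br bp np by (simp add: divide_simps mult.commute)
    also have "\<dots> = (real (n-k) / real n) ^ d v" by (simp add: power_divide)
    also have "\<dots> = (1 - u) ^ d v"
    proof -
      have "real (n-k) / real n = 1 - u" using npos kn by (simp add: u_def of_nat_diff field_simps)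
      then show ?thesis by simp
    qed
    also have "\<dots> \<le> (1 - u) ^ 2" using dv vn assms(1) u0 u1
      by (intro power_decreasing) auto
    finally show ?thesis .
  qed
  have "measure_pmf.prob (random_digraph n d) {N. card (rev_reach n N B) = k}
       \<le> (\<Sum>S\<in>{S. B \<subseteq> S \<and> S \<subseteq> U \<and> card S = k}.
            \<Prod>v\<in>U. (if v \<in> B then 1 else if v \<in> S then 1 - a v else a v))"
    unfolding U_def a_def by (rule main_bound[OF dn BU])
  also have "\<dots> \<le> 2 ^ k * (\<Prod>v\<in>U - B. (1 + a v) / 2)"
    by (rule sum_bound) (use BU a0 a1 in \<open>auto simp: U_def\<close>)
  also have "\<dots> \<le> 2 ^ k * (\<Prod>v\<in>U - B. (1 + (1 - u)^2) / 2)"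
    using au a0 by (intro mult_left_mono prod_mono) auto
  also have "\<dots> = 2 ^ k * ((1 + (1 - real k / real n)^2) / 2) ^ (n - t)"
  proof -
    have "card (U - B) = n - t" using BU ct by (simp add: U_def card_Diff_subset finite_subset)
    then show ?thesis by (simp add: u_def)
  qed
  also have "\<dots> \<le> 1 / (real n)^2"
    by (rule numeric[OF n2]) (use kle tle klog in auto)
  finally show "measure_pmf.prob (random_digraph n d) {N. card (rev_reach n N B) = k} \<le> 1 / (real n)^2" .
qed

end
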